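(* Under the curve flow $\gamma_t=\gamma''-\tfrac23k_1\gamma$, one has $(k_1)_t=D(k_1'+2k_2)$, so $\int k_1\,\mathrm{d}x$ is conserved.
   Context: $\gamma(x,t)$ is a family of nondegenerate curves in centroaffine $\mathbb R^3$ parametrized by centroaffine arclength $x$ ($\det(\gamma,\gamma',\gamma'')=1$), with invariants $k_1,k_2$ defined by $\gamma'''=(k_1\gamma)'+k_2\gamma$; $D=\partial/\partial x$. *)

theory Defs
  imports "HOL-Analysis.Analysis"
begin

text \<open>Functions of two real variables (x = arclength parameter, t = time).
  Partial derivatives with respect to x and t.\<close>

definition Dx :: "(real \<Rightarrow> real \<Rightarrow> 'a::real_normed_vector) \<Rightarrow> real \<Rightarrow> real \<Rightarrow> 'a" where
  "Dx f = (\<lambda>x t. vector_derivative (\<lambda>s. f s t) (at x))"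

definition Dt :: "(real \<Rightarrow> real \<Rightarrow> 'a::real_normed_vector) \<Rightarrow> real \<Rightarrow> real \<Rightarrow> 'a" where
  "Dt f = (\<lambda>x t. vector_derivative (\<lambda>s. f x s) (at t))"

text \<open>Smoothness (C-infinity) on the whole (x,t)-plane: f lies in a class of
  (jointly Frechet) differentiable functions closed under both partial derivatives.\<close>

definition smooth2 :: "(real \<Rightarrow> real \<Rightarrow> 'a::real_normed_vector) \<Rightarrow> bool" where
  "smooth2 f \<longleftrightarrow> (\<exists>S. f \<in> S \<and>
     (\<forall>g\<in>S. (\<forall>p. (case_prod g) differentiable (at p)) \<and> Dx g \<in> S \<and> Dt g \<in> S))"

definition det3 :: "real^3 \<Rightarrow> real^3 \<Rightarrow> real^3 \<Rightarrow> real" where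
  "det3 a b c = det (vector [a, b, c] :: real^3^3)"

end

theory Submission imports Defs begin

lemma det3_expand: "det3 a b c =
    a$1 * b$2 * c$3 + a$2 * b$3 * c$1 + a$3 * b$1 * c$2
  - a$1 * b$3 * c$2 - a$2 * b$1 * c$3 - a$3 * b$2 * c$1"
  unfolding det3_def det_3 by (simp add: vector_def)

lemma det3_add2: "det3 a (u + v) c = det3 a u c + det3 a v c"
  unfolding det3_expand by (simp add: algebra_simps)
lemma det3_diff2: "det3 a (u - v) c = det3 a u c - det3 a v c"
  unfolding det3_expand by (simp add: algebra_simps)
lemma det3_scale2: "det3 a (r *\<^sub>R u) c = r * det3 a u c"
  unfolding det3_expand by (simp add: algebra_simps)
lemma det3_add1: "det3 (u + v) b c = det3 u b c + det3 v b c"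
  unfolding det3_expand by (simp add: algebra_simps)
lemma det3_scale1: "det3 (r *\<^sub>R u) b c = r * det3 u b c"
  unfolding det3_expand by (simp add: algebra_simps)
lemma det3_rep12: "det3 a a c = 0" unfolding det3_expand by (simp add: algebra_simps)
lemma det3_rep23: "det3 a c c = 0" unfolding det3_expand by (simp add: algebra_simps)
lemma det3_rep13: "det3 a b a = 0" unfolding det3_expand by (simp add: algebra_simps)

lemma smooth2_Dx: "smooth2 f \<Longrightarrow> smooth2 (Dx f)"
  unfolding smooth2_def by blast
lemma smooth2_Dt: "smooth2 f \<Longrightarrow> smooth2 (Dt f)"
  unfolding smooth2_def by blast
lemma smooth2_diff: "smooth2 f \<Longrightarrow> (case_prod f) differentiable (at p)"
  unfolding smooth2_def by blast
lemma smooth2_cont: "smooth2 f \<Longrightarrow> continuous_on A (case_prod f)"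
  by (meson continuous_at_imp_continuous_on differentiable_imp_continuous_within smooth2_diff)
lemma smooth2_cont_swap: "smooth2 f \<Longrightarrow> continuous_on A (\<lambda>(t,x). f x t)"
proof -
  assume s: "smooth2 f"
  have "continuous_on A (case_prod f \<circ> (\<lambda>(t,x). (x,t)))"
    by (rule continuous_on_compose) (auto intro!: continuous_intros smooth2_cont[OF s, unfolded case_prod_unfold] simp: split_beta)
  thus ?thesis by (simp add: o_def split_beta)
qed

lemma smooth2_hvdx: "smooth2 f \<Longrightarrow> ((\<lambda>s. f s t) has_vector_derivative Dx f x t) (at x)"
proof -
  assume s: "smooth2 f"
  have "(case_prod f \<circ> (\<lambda>s. (s,t))) differentiable (at x)"
    by (rule differentiable_chain_at) (auto intro!: smooth2_diff[OF s] derivative_intros)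
  hence "(\<lambda>s. f s t) differentiable (at x)" by (simp add: o_def)
  thus ?thesis unfolding Dx_def by (simp add: vector_derivative_works)
qed

lemma smooth2_hvdt: "smooth2 f \<Longrightarrow> ((\<lambda>s. f x s) has_vector_derivative Dt f x t) (at t)"
proof -
  assume s: "smooth2 f"
  have "(case_prod f \<circ> (\<lambda>s. (x,s))) differentiable (at t)"
    by (rule differentiable_chain_at) (auto intro!: smooth2_diff[OF s] derivative_intros)
  hence "(\<lambda>s. f x s) differentiable (at t)" by (simp add: o_def)
  thus ?thesis unfolding Dt_def by (simp add: vector_derivative_works)
qed

lemma smooth2_cont_x: "smooth2 f \<Longrightarrow> continuous_on A (\<lambda>s. f s t)"
proof -
  assume s: "smooth2 f"
  have "continuous_on A (case_prod f \<circ> (\<lambda>s. (s,t)))"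
    by (intro continuous_on_compose continuous_intros smooth2_cont[OF s])
  thus ?thesis by (simp add: o_def)
qed
lemma smooth2_cont_t: "smooth2 f \<Longrightarrow> continuous_on A (\<lambda>s. f x s)"
proof -
  assume s: "smooth2 f"
  have "continuous_on A (case_prod f \<circ> (\<lambda>s. (x,s)))"
    by (intro continuous_on_compose continuous_intros smooth2_cont[OF s])
  thus ?thesis by (simp add: o_def)
qed

lemma Dx_eqI: "((\<lambda>s. f s t) has_vector_derivative v) (at x) \<Longrightarrow> Dx f x t = v"
  unfolding Dx_def by (simp add: vector_derivative_at)
lemma Dt_eqI: "((\<lambda>s. f x s) has_vector_derivative v) (at t) \<Longrightarrow> Dt f x t = v"
  unfolding Dt_def by (simp add: vector_derivative_at)

lemma Dx_Dt_comm:
  fixes f :: "real \<Rightarrow> real \<Rightarrow> 'a::banach"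
  assumes s: "smooth2 f"
  shows "Dt (Dx f) x0 t0 = Dx (Dt f) x0 t0"
proof -
  define a where "a = x0 - 1"
  define b where "b = x0 + 1"
  define G where "G = Dt (Dx f)"
  have sG: "smooth2 G" unfolding G_def using s by (intro smooth2_Dt smooth2_Dx)
  have sDx: "smooth2 (Dx f)" using s by (rule smooth2_Dx)
  have ftc: "f x t = f a t + integral {a..x} (\<lambda>s. Dx f s t)" if "a \<le> x" for x t
  proof -
    have "((\<lambda>s. Dx f s t) has_integral (f x t - f a t)) {a..x}"
      by (rule fundamental_theorem_of_calculus[OF that])
         (auto intro: has_vector_derivative_at_within smooth2_hvdx[OF s])
    thus ?thesis by (simp add: integral_unique)
  qed
  have leib: "((\<lambda>t. integral {a..x} (\<lambda>s. Dx f s t)) has_vector_derivative integral {a..x} (\<lambda>s. G s t)) (at t)" for x t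
  proof -
    have "((\<lambda>t. integral (cbox a x) (\<lambda>s. Dx f s t)) has_vector_derivative integral (cbox a x) (\<lambda>s. G s t)) (at t within UNIV)"
    proof (rule leibniz_rule_vector_derivative[where f="\<lambda>t s. Dx f s t" and fx="\<lambda>t s. G s t"])
      show "((\<lambda>t. Dx f s t) has_vector_derivative G s t) (at t within UNIV)" for s t
        unfolding G_def by (rule smooth2_hvdt[OF sDx])
      show "(\<lambda>s. Dx f s t) integrable_on cbox a x" for t
        by (rule integrable_continuous) (rule smooth2_cont_x[OF sDx])
      show "continuous_on (UNIV \<times> cbox a x) (\<lambda>(t, s). G s t)"
        by (rule smooth2_cont_swap[OF sG])
    qed auto
    thus ?thesis by (simp add: cbox_interval)
  qed
  have Dtf: "Dt f x t = Dt f a t + integral {a..x} (\<lambda>s. G s t)" if "a \<le> x" for x t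
  proof (rule Dt_eqI)
    have "((\<lambda>t. f a t + integral {a..x} (\<lambda>s. Dx f s t)) has_vector_derivative Dt f a t + integral {a..x} (\<lambda>s. G s t)) (at t)"
      by (intro has_vector_derivative_add smooth2_hvdt[OF s] leib)
    moreover have "(\<lambda>t. f a t + integral {a..x} (\<lambda>s. Dx f s t)) = (\<lambda>t. f x t)"
      using ftc[OF that] by auto
    ultimately show "((\<lambda>t. f x t) has_vector_derivative Dt f a t + integral {a..x} (\<lambda>s. G s t)) (at t)" by simp
  qed
  have cG: "continuous_on {a..b} (\<lambda>s. G s t0)"
    by (rule smooth2_cont_x[OF sG])
  have x0in: "x0 \<in> {a<..<b}" by (simp add: a_def b_def)
  have x0in': "x0 \<in> {a..b}" by (simp add: a_def b_def)
  have "((\<lambda>x. integral {a..x} (\<lambda>s. G s t0)) has_vector_derivative G x0 t0) (at x0 within {a..b})"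
    by (rule integral_has_vector_derivative[OF cG x0in'])
  hence "((\<lambda>x. integral {a..x} (\<lambda>s. G s t0)) has_vector_derivative G x0 t0) (at x0 within {a<..<b})"
    by (rule has_vector_derivative_within_subset) (simp add: greaterThanLessThan_subseteq_atLeastAtMost_iff)
  hence "((\<lambda>x. integral {a..x} (\<lambda>s. G s t0)) has_vector_derivative G x0 t0) (at x0)"
    by (simp only: at_within_open[OF x0in open_greaterThanLessThan])
  hence "((\<lambda>x. Dt f a t0 + integral {a..x} (\<lambda>s. G s t0)) has_vector_derivative 0 + G x0 t0) (at x0)"
    by (intro has_vector_derivative_add has_vector_derivative_const)
  hence "((\<lambda>x. Dt f a t0 + integral {a..x} (\<lambda>s. G s t0)) has_vector_derivative G x0 t0) (at x0)"
    by (simp only: add_0_left)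
  hence "((\<lambda>x. Dt f x t0) has_vector_derivative G x0 t0) (at x0)"
    by (rule has_vector_derivative_transform_within_open[OF _ open_greaterThanLessThan x0in])
       (rule Dtf[symmetric], simp)
  hence "Dx (Dt f) x0 t0 = G x0 t0" by (rule Dx_eqI)
  thus ?thesis by (simp add: G_def)
qed

lemma smooth2_hvdxr: "smooth2 (f::real\<Rightarrow>real\<Rightarrow>real) \<Longrightarrow> ((\<lambda>s. f s t) has_field_derivative Dx f x t) (at x)"
  by (simp add: has_real_derivative_iff_has_vector_derivative smooth2_hvdx)
lemma smooth2_hvdtr: "smooth2 (f::real\<Rightarrow>real\<Rightarrow>real) \<Longrightarrow> ((\<lambda>s. f x s) has_field_derivative Dt f x t) (at t)"
  by (simp add: has_real_derivative_iff_has_vector_derivative smooth2_hvdt)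

lemma Dx_periodic:
  assumes s: "smooth2 f" and p: "\<And>x t. f (x + L) t = f x t"
  shows "Dx f (x + L) t = Dx f x t"
proof -
  have "((\<lambda>s. f s t) \<circ> (\<lambda>s. s + L) has_vector_derivative (1::real) *\<^sub>R Dx f (x + L) t) (at x)"
    by (rule vector_diff_chain_at) (auto intro!: derivative_eq_intros smooth2_hvdx[OF s])
  moreover have "(\<lambda>s. f s t) \<circ> (\<lambda>s. s + L) = (\<lambda>s. f s t)" using p by (auto simp: o_def)
  ultimately have "((\<lambda>s. f s t) has_vector_derivative Dx f (x + L) t) (at x)" by simp
  thus ?thesis by (rule Dx_eqI[symmetric])
qed

lemma part1:
  fixes \<gamma> :: "real \<Rightarrow> real \<Rightarrow> real^3"
    and k1 k2 :: "real \<Rightarrow> real \<Rightarrow> real"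
  assumes smooth: "smooth2 \<gamma>" "smooth2 k1" "smooth2 k2"
    and arclength: "\<And>x t. det3 (\<gamma> x t) (Dx \<gamma> x t) (Dx (Dx \<gamma>) x t) = 1"
    and invariants: "\<And>x t. Dx (Dx (Dx \<gamma>)) x t
                        = Dx (\<lambda>x t. k1 x t *\<^sub>R \<gamma> x t) x t + k2 x t *\<^sub>R \<gamma> x t"
    and flow: "\<And>x t. Dt \<gamma> x t = Dx (Dx \<gamma>) x t - (2/3 * k1 x t) *\<^sub>R \<gamma> x t"
  shows "Dt k1 x t = Dx (\<lambda>x t. Dx k1 x t + 2 * k2 x t) x t"
    and "Dx (Dx (Dx \<gamma>)) x t = k1 x t *\<^sub>R Dx \<gamma> x t + (Dx k1 x t + k2 x t) *\<^sub>R \<gamma> x t"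
proof -
  define g1 where "g1 = Dx \<gamma>"
  define g2 where "g2 = Dx g1"
  define g3 where "g3 = Dx g2"
  define A1 where "A1 = Dx k1"
  define A2 where "A2 = Dx A1"
  define A3 where "A3 = Dx A2"
  define C1 where "C1 = Dx k2"
  define C2 where "C2 = Dx C1"
  define b where "b = (\<lambda>x t. A1 x t + k2 x t)"
  have s0: "smooth2 \<gamma>" and s1: "smooth2 g1" and s2: "smooth2 g2" and s3: "smooth2 g3"
    and sk: "smooth2 k1" and sA1: "smooth2 A1" and sA2: "smooth2 A2"
    and sk2: "smooth2 k2" and sC1: "smooth2 C1"
    using smooth unfolding g1_def g2_def g3_def A1_def A2_def C1_def
    by (auto intro!: smooth2_Dx)
  have hb: "((\<lambda>s. b s t) has_field_derivative (A2 x t + C1 x t)) (at x)" for x t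
    unfolding b_def A2_def C1_def by (intro DERIV_add smooth2_hvdxr sA1 sk2)
  have hbt: "((\<lambda>s. b x s) has_field_derivative (Dt A1 x t + Dt k2 x t)) (at t)" for x t
    unfolding b_def by (intro DERIV_add smooth2_hvdtr sA1 sk2)
  have E1p: "g3 x t = k1 x t *\<^sub>R g1 x t + b x t *\<^sub>R \<gamma> x t" for x t
  proof -
    have "Dx (\<lambda>x t. k1 x t *\<^sub>R \<gamma> x t) x t = k1 x t *\<^sub>R g1 x t + A1 x t *\<^sub>R \<gamma> x t"
      unfolding g1_def A1_def by (intro Dx_eqI has_vector_derivative_scaleR smooth2_hvdxr smooth2_hvdx sk s0)
    thus ?thesis using invariants[of x t] unfolding g3_def g2_def g1_def b_def
      by (simp add: algebra_simps)
  qed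
  hence E1: "g3 = (\<lambda>x t. k1 x t *\<^sub>R g1 x t + b x t *\<^sub>R \<gamma> x t)" by (intro ext)
  show "Dx (Dx (Dx \<gamma>)) x t = k1 x t *\<^sub>R Dx \<gamma> x t + (Dx k1 x t + k2 x t) *\<^sub>R \<gamma> x t"
    using E1p[of x t] by (simp add: g3_def g2_def g1_def b_def A1_def)
  have E2p: "Dx g3 x t = (k1 x t *\<^sub>R g2 x t + A1 x t *\<^sub>R g1 x t) + (b x t *\<^sub>R g1 x t + (A2 x t + C1 x t) *\<^sub>R \<gamma> x t)" for x t
    unfolding E1 g2_def g1_def A1_def
    by (intro Dx_eqI has_vector_derivative_add has_vector_derivative_scaleR smooth2_hvdxr smooth2_hvdx
         sk s0 s1[unfolded g1_def] hb[unfolded A1_def])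
  hence E2: "Dx g3 = (\<lambda>x t. (k1 x t *\<^sub>R g2 x t + A1 x t *\<^sub>R g1 x t) + (b x t *\<^sub>R g1 x t + (A2 x t + C1 x t) *\<^sub>R \<gamma> x t))"
    by (intro ext)
  have hAC: "((\<lambda>s. A2 s t + C1 s t) has_field_derivative (A3 x t + C2 x t)) (at x)" for x t
    unfolding A3_def C2_def by (intro DERIV_add smooth2_hvdxr sA2 sC1)
  have hk23: "((\<lambda>s. 2/3 * k1 s t) has_field_derivative (2/3 * A1 x t)) (at x)" for x t
    unfolding A1_def by (intro DERIV_cmult smooth2_hvdxr sk)
  have hA123: "((\<lambda>s. 2/3 * A1 s t) has_field_derivative (2/3 * A2 x t)) (at x)" for x t
    unfolding A2_def by (intro DERIV_cmult smooth2_hvdxr sA1)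
  have hA223: "((\<lambda>s. 2/3 * A2 s t) has_field_derivative (2/3 * A3 x t)) (at x)" for x t
    unfolding A3_def by (intro DERIV_cmult smooth2_hvdxr sA2)
  have dk: "((\<lambda>s. k1 s t) has_field_derivative A1 x t) (at x)" for x t
    unfolding A1_def by (intro smooth2_hvdxr sk)
  have dA1: "((\<lambda>s. A1 s t) has_field_derivative A2 x t) (at x)" for x t
    unfolding A2_def by (intro smooth2_hvdxr sA1)
  have d0: "((\<lambda>s. \<gamma> s t) has_vector_derivative g1 x t) (at x)" for x t
    unfolding g1_def by (intro smooth2_hvdx s0)
  have d1: "((\<lambda>s. g1 s t) has_vector_derivative g2 x t) (at x)" for x t
    unfolding g2_def by (intro smooth2_hvdx s1)
  have d2: "((\<lambda>s. g2 s t) has_vector_derivative g3 x t) (at x)" for x t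
    unfolding g3_def by (intro smooth2_hvdx s2)
  have d3: "((\<lambda>s. g3 s t) has_vector_derivative Dx g3 x t) (at x)" for x t
    by (intro smooth2_hvdx s3)
  have E3: "Dx (Dx g3) x t = ((k1 x t *\<^sub>R g3 x t + A1 x t *\<^sub>R g2 x t) + (A1 x t *\<^sub>R g2 x t + A2 x t *\<^sub>R g1 x t))
      + ((b x t *\<^sub>R g2 x t + (A2 x t + C1 x t) *\<^sub>R g1 x t) + ((A2 x t + C1 x t) *\<^sub>R g1 x t + (A3 x t + C2 x t) *\<^sub>R \<gamma> x t))"
    unfolding E2
    by (intro Dx_eqI has_vector_derivative_add has_vector_derivative_scaleR dk dA1 d0 d1 d2 hb hAC)
  have H0: "Dt \<gamma> = (\<lambda>x t. g2 x t - (2/3 * k1 x t) *\<^sub>R \<gamma> x t)"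
    using flow unfolding g2_def g1_def by (intro ext) simp
  have H0p: "Dt \<gamma> x t = g2 x t - (2/3 * k1 x t) *\<^sub>R \<gamma> x t" for x t
    unfolding H0 by simp
  have H1p: "Dx (Dt \<gamma>) x t = g3 x t - ((2/3 * k1 x t) *\<^sub>R g1 x t + (2/3 * A1 x t) *\<^sub>R \<gamma> x t)" for x t
    unfolding H0
    by (intro Dx_eqI has_vector_derivative_diff has_vector_derivative_scaleR hk23 d0 d2)
  hence H1: "Dx (Dt \<gamma>) = (\<lambda>x t. g3 x t - ((2/3 * k1 x t) *\<^sub>R g1 x t + (2/3 * A1 x t) *\<^sub>R \<gamma> x t))"
    by (intro ext)
  have H2p: "Dx (Dx (Dt \<gamma>)) x t = Dx g3 x t - (((2/3 * k1 x t) *\<^sub>R g2 x t + (2/3 * A1 x t) *\<^sub>R g1 x t)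
       + ((2/3 * A1 x t) *\<^sub>R g1 x t + (2/3 * A2 x t) *\<^sub>R \<gamma> x t))" for x t
    unfolding H1
    by (intro Dx_eqI has_vector_derivative_diff has_vector_derivative_add has_vector_derivative_scaleR hk23 hA123 d0 d1 d3)
  hence H2: "Dx (Dx (Dt \<gamma>)) = (\<lambda>x t. Dx g3 x t - (((2/3 * k1 x t) *\<^sub>R g2 x t + (2/3 * A1 x t) *\<^sub>R g1 x t)
       + ((2/3 * A1 x t) *\<^sub>R g1 x t + (2/3 * A2 x t) *\<^sub>R \<gamma> x t)))"
    by (intro ext)
  have H3p: "Dx (Dx (Dx (Dt \<gamma>))) x t = Dx (Dx g3) x t - ((((2/3 * k1 x t) *\<^sub>R g3 x t + (2/3 * A1 x t) *\<^sub>R g2 x t)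
       + ((2/3 * A1 x t) *\<^sub>R g2 x t + (2/3 * A2 x t) *\<^sub>R g1 x t))
       + (((2/3 * A1 x t) *\<^sub>R g2 x t + (2/3 * A2 x t) *\<^sub>R g1 x t) + ((2/3 * A2 x t) *\<^sub>R g1 x t + (2/3 * A3 x t) *\<^sub>R \<gamma> x t)))" for x t
    unfolding H2
    by (intro Dx_eqI has_vector_derivative_diff has_vector_derivative_add has_vector_derivative_scaleR hk23 hA123 hA223
       d0 d1 d2 smooth2_hvdx smooth2_Dx s3)
  have T1: "Dt g1 = Dx (Dt \<gamma>)"
    unfolding g1_def by (intro ext Dx_Dt_comm s0)
  have T2: "Dt g2 = Dx (Dx (Dt \<gamma>))"
    unfolding g2_def by (intro ext) (simp add: Dx_Dt_comm[OF s1] T1)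
  have T3: "Dt g3 x t = Dx (Dx (Dx (Dt \<gamma>))) x t"
    unfolding g3_def by (simp add: Dx_Dt_comm[OF s2] T2)
  have L: "Dt g3 x t = (k1 x t *\<^sub>R Dt g1 x t + Dt k1 x t *\<^sub>R g1 x t) + (b x t *\<^sub>R Dt \<gamma> x t + (Dt A1 x t + Dt k2 x t) *\<^sub>R \<gamma> x t)"
    unfolding E1
    by (intro Dt_eqI has_vector_derivative_add has_vector_derivative_scaleR smooth2_hvdtr smooth2_hvdt sk s0 s1 hbt)
  have phi1: "det3 (\<gamma> x t) (g1 x t) (g2 x t) = 1"
    using arclength unfolding g2_def g1_def by simp
  have phi3: "det3 (\<gamma> x t) (g3 x t) (g2 x t) = k1 x t"
    unfolding E1p by (simp add: det3_add2 det3_scale2 det3_rep12 phi1)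
  have V: "(k1 x t *\<^sub>R Dt g1 x t + Dt k1 x t *\<^sub>R g1 x t) + (b x t *\<^sub>R Dt \<gamma> x t + (Dt A1 x t + Dt k2 x t) *\<^sub>R \<gamma> x t)
        = Dx (Dx (Dx (Dt \<gamma>))) x t"
    using L T3 by simp
  have "det3 (\<gamma> x t) ((k1 x t *\<^sub>R Dt g1 x t + Dt k1 x t *\<^sub>R g1 x t) + (b x t *\<^sub>R Dt \<gamma> x t + (Dt A1 x t + Dt k2 x t) *\<^sub>R \<gamma> x t)) (g2 x t)
     = det3 (\<gamma> x t) (Dx (Dx (Dx (Dt \<gamma>))) x t) (g2 x t)"
    by (simp only: V)
  hence eq: "Dt k1 x t = A2 x t + 2 * C1 x t"
    unfolding T1 H1p H3p E3
    by (simp only: H0p det3_add2 det3_diff2 det3_scale2 det3_rep12 det3_rep23 phi1 phi3) (simp add: algebra_simps)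
  have "Dx (\<lambda>x t. Dx k1 x t + 2 * k2 x t) x t = A2 x t + 2 * C1 x t"
    unfolding A2_def A1_def C1_def
    by (intro Dx_eqI, unfold has_real_derivative_iff_has_vector_derivative[symmetric],
        intro DERIV_add DERIV_cmult smooth2_hvdxr smooth2_Dx sk sk2)
  with eq show "Dt k1 x t = Dx (\<lambda>x t. Dx k1 x t + 2 * k2 x t) x t"
    by (simp add: algebra_simps)
qed

theorem mainTheorem4:
  fixes \<gamma> :: "real \<Rightarrow> real \<Rightarrow> real^3"
    and k1 k2 :: "real \<Rightarrow> real \<Rightarrow> real"
  assumes smooth: "smooth2 \<gamma>" "smooth2 k1" "smooth2 k2"
    and arclength: "\<And>x t. det3 (\<gamma> x t) (Dx \<gamma> x t) (Dx (Dx \<gamma>) x t) = 1"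
    and invariants: "\<And>x t. Dx (Dx (Dx \<gamma>)) x t
                        = Dx (\<lambda>x t. k1 x t *\<^sub>R \<gamma> x t) x t + k2 x t *\<^sub>R \<gamma> x t"
    and flow: "\<And>x t. Dt \<gamma> x t = Dx (Dx \<gamma>) x t - (2/3 * k1 x t) *\<^sub>R \<gamma> x t"
  shows "(\<forall>x t. Dt k1 x t = Dx (\<lambda>x t. Dx k1 x t + 2 * k2 x t) x t)
       \<and> (\<forall>L>0. (\<forall>x t. \<gamma> (x + L) t = \<gamma> x t) \<longrightarrow>
            (\<forall>t1 t2. integral {0..L} (\<lambda>x. k1 x t1) = integral {0..L} (\<lambda>x. k1 x t2)))"
proof (intro conjI allI impI)
  note P1 = part1[OF smooth arclength invariants flow]
  show "Dt k1 x t = Dx (\<lambda>x t. Dx k1 x t + 2 * k2 x t) x t" for x t by (rule P1(1))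
  fix L :: real and t1 t2
  assume L: "L > 0" and per: "\<forall>x t. \<gamma> (x + L) t = \<gamma> x t"
  have s0: "smooth2 \<gamma>" and sk: "smooth2 k1" and sk2: "smooth2 k2" using smooth by auto
  have p0: "\<And>x t. \<gamma> (x + L) t = \<gamma> x t" using per by auto
  have p1: "\<And>x t. Dx \<gamma> (x + L) t = Dx \<gamma> x t" by (rule Dx_periodic[OF s0 p0])
  have p2: "\<And>x t. Dx (Dx \<gamma>) (x + L) t = Dx (Dx \<gamma>) x t" by (rule Dx_periodic[OF smooth2_Dx[OF s0] p1])
  have p3: "\<And>x t. Dx (Dx (Dx \<gamma>)) (x + L) t = Dx (Dx (Dx \<gamma>)) x t"
    by (rule Dx_periodic[OF smooth2_Dx[OF smooth2_Dx[OF s0]] p2])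
  have k1f: "k1 x t = det3 (\<gamma> x t) (Dx (Dx (Dx \<gamma>)) x t) (Dx (Dx \<gamma>) x t)" for x t
    unfolding P1(2) by (simp add: det3_add2 det3_scale2 det3_rep12 arclength)
  have bf: "Dx k1 x t + k2 x t = det3 (Dx (Dx (Dx \<gamma>)) x t) (Dx \<gamma> x t) (Dx (Dx \<gamma>) x t)" for x t
    unfolding P1(2) by (simp add: det3_add1 det3_scale1 det3_rep12 arclength)
  have pk1: "\<And>x t. k1 (x + L) t = k1 x t" by (simp add: k1f p0 p2 p3)
  have pA1: "\<And>x t. Dx k1 (x + L) t = Dx k1 x t" by (rule Dx_periodic[OF sk pk1])
  have pk2: "k2 (x + L) t = k2 x t" for x t
    using bf[of "x + L" t] bf[of x t] by (simp add: p1 p2 p3 pA1)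
  have dG: "((\<lambda>s. Dx k1 s t + 2 * k2 s t) has_vector_derivative Dt k1 x t) (at x)" for x t
  proof -
    have "((\<lambda>s. Dx k1 s t + 2 * k2 s t) has_real_derivative (Dx (Dx k1) x t + 2 * Dx k2 x t)) (at x)"
      by (intro DERIV_add DERIV_cmult smooth2_hvdxr smooth2_Dx sk sk2)
    hence h: "((\<lambda>s. Dx k1 s t + 2 * k2 s t) has_vector_derivative (Dx (Dx k1) x t + 2 * Dx k2 x t)) (at x)"
      by (simp add: has_real_derivative_iff_has_vector_derivative)
    have "Dt k1 x t = Dx (Dx k1) x t + 2 * Dx k2 x t"
      using P1(1)[of x t] Dx_eqI[where f="\<lambda>x t. Dx k1 x t + 2 * k2 x t", OF h] by simp
    thus ?thesis using h by simp
  qed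
  have int0: "integral {0..L} (\<lambda>x. Dt k1 x t) = 0" for t
  proof -
    have "((\<lambda>x. Dt k1 x t) has_integral ((Dx k1 L t + 2 * k2 L t) - (Dx k1 0 t + 2 * k2 0 t))) {0..L}"
      by (rule fundamental_theorem_of_calculus[where f="\<lambda>s. Dx k1 s t + 2 * k2 s t"])
         (use L in \<open>auto intro: has_vector_derivative_at_within dG\<close>)
    moreover have "Dx k1 L t = Dx k1 0 t" "k2 L t = k2 0 t"
      using pA1[of 0 t] pk2[of 0 t] by simp_all
    ultimately show ?thesis by (simp add: integral_unique)
  qed
  have LB: "((\<lambda>t. integral (cbox 0 L) (\<lambda>x. k1 x t)) has_field_derivative integral (cbox 0 L) (\<lambda>x. Dt k1 x t)) (at t within UNIV)" for t
  proof (rule leibniz_rule_field_derivative[where f="\<lambda>t x. k1 x t" and fx="\<lambda>t x. Dt k1 x t"])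
    show "((\<lambda>t. k1 x t) has_field_derivative Dt k1 x t) (at t within UNIV)" for x t
      by (rule smooth2_hvdtr[OF sk])
    show "(\<lambda>x. k1 x t) integrable_on cbox 0 L" for t
      by (rule integrable_continuous) (rule smooth2_cont_x[OF sk])
    show "continuous_on (UNIV \<times> cbox 0 L) (\<lambda>(t, x). Dt k1 x t)"
      by (rule smooth2_cont_swap[OF smooth2_Dt[OF sk]])
  qed auto
  hence "DERIV (\<lambda>t. integral {0..L} (\<lambda>x. k1 x t)) t :> 0" for t
    using LB[of t] int0[of t] by (simp add: cbox_interval)
  thus "integral {0..L} (\<lambda>x. k1 x t1) = integral {0..L} (\<lambda>x. k1 x t2)"
    using DERIV_isconst_all[where f="\<lambda>t. integral {0..L} (\<lambda>x. k1 x t)"] by blast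
qed

end
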